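(* Let $\chi\geq 3$ and $m\geq \vec{R}(\chi)$ be integers, and let $H=H(TT_\chi,m)$. Then for every integer $n\ge 3$, $R(P^{(3)}_{n,2},H)\geq \left(\frac23 n-3\right)(\vec{R}(\chi)-1)+1$; in particular $R(P^{(3)}_{n,2},H)\geq (1+o(1))\frac23(\vec{R}(\chi)-1)n$ as $n\to\infty$.
   Context: $TT_\chi$ denotes the transitive tournament on $[\chi]$. For a tournament $T_\chi$ on $[\chi]$ and $m\ge1$, $H(T_\chi,m)$ is the $3$-uniform hypergraph whose vertex set is partitioned into sets $A_1,\dots,A_\chi$ each of size $m$, with edge set $\{xyz: x,y\in A_i,\ z\in A_j,\ (i,j)\text{ an arc of }T_\chi\}$. $\vec{R}(\ell)$ is the least $N$ such that every tournament on at least $N$ vertices contains a copy of $TT_\ell$. $R(G,H)$ is the least $N$ such that every red/blue colouring of the edges of $K^{(3)}_N$ contains a red copy of $G$ or a blue copy of $H$. The tight path $P^{(3)}_{n,2}$ has vertices $v_1,\dots,v_n$ and edges $\{v_i,v_{i+1},v_{i+2}\}$, $i\in[n-2]$. *)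

theory Defs
  imports Complex_Main
begin

definition tournament_on :: "'a set \<Rightarrow> ('a \<Rightarrow> 'a \<Rightarrow> bool) \<Rightarrow> bool" where
  "tournament_on V T \<longleftrightarrow>
     (\<forall>x\<in>V. \<not> T x x) \<and>
     (\<forall>x\<in>V. \<forall>y\<in>V. x \<noteq> y \<longrightarrow> (T x y \<longleftrightarrow> \<not> T y x))"

definition contains_TT :: "nat \<Rightarrow> 'a set \<Rightarrow> ('a \<Rightarrow> 'a \<Rightarrow> bool) \<Rightarrow> bool" where
  "contains_TT l V T \<longleftrightarrow>
     (\<exists>f. inj_on f {0..<l} \<and> f ` {0..<l} \<subseteq> V \<and>
          (\<forall>i<l. \<forall>j<l. i < j \<longrightarrow> T (f i) (f j)))"

definition dir_ramsey :: "nat \<Rightarrow> nat" where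
  "dir_ramsey l = (LEAST N. \<forall>M\<ge>N. \<forall>T :: nat \<Rightarrow> nat \<Rightarrow> bool.
       tournament_on {0..<M} T \<longrightarrow> contains_TT l {0..<M} T)"

(* A colouring of the edges of K^(3)_N on {0..<N} is a predicate on sets of
   vertices (only its values on 3-subsets matter).  "embeds VG EG N P" says there
   is a copy of (VG,EG) in K_N all of whose edges satisfy P. *)
definition embeds :: "'a set \<Rightarrow> 'a set set \<Rightarrow> nat \<Rightarrow> (nat set \<Rightarrow> bool) \<Rightarrow> bool" where
  "embeds VG EG N P \<longleftrightarrow>
     (\<exists>f. inj_on f VG \<and> f ` VG \<subseteq> {0..<N} \<and> (\<forall>e\<in>EG. P (f ` e)))"

(* R(G,H): least N such that every red/blue colouring of K^(3)_N has a red G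
   (red = True) or a blue H (blue = False). *)
definition ramsey3 :: "'a set \<Rightarrow> 'a set set \<Rightarrow> 'b set \<Rightarrow> 'b set set \<Rightarrow> nat" where
  "ramsey3 VG EG VH EH = (LEAST N. \<forall>c :: nat set \<Rightarrow> bool.
       embeds VG EG N c \<or> embeds VH EH N (\<lambda>e. \<not> c e))"

definition tight_path_V :: "nat \<Rightarrow> nat set" where
  "tight_path_V n = {0..<n}"

definition tight_path_E :: "nat \<Rightarrow> nat set set" where
  "tight_path_E n = {{i, i+1, i+2} | i. i + 2 < n}"

(* H(TT_chi, m): vertex classes A_i = {(i,k) | k < m}, i < chi; arcs of TT_chi
   are (i,j) with i < j. *)
definition HTT_V :: "nat \<Rightarrow> nat \<Rightarrow> (nat \<times> nat) set" where
  "HTT_V chi m = {0..<chi} \<times> {0..<m}"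

definition HTT_E :: "nat \<Rightarrow> nat \<Rightarrow> (nat \<times> nat) set set" where
  "HTT_E chi m = {{(i,k), (i,k'), (j,l)} | i j k k' l.
      i < j \<and> j < chi \<and> k < m \<and> k' < m \<and> l < m \<and> k \<noteq> k'}"

end

theory Submission
  imports Defs "HOL-Library.Ramsey"
begin


lemma tournament_sub: "tournament_on V T \<Longrightarrow> W \<subseteq> V \<Longrightarrow> tournament_on W T"
  unfolding tournament_on_def by (meson subsetD)

lemma contains_TT_mono: "contains_TT l W T \<Longrightarrow> W \<subseteq> V \<Longrightarrow> contains_TT l V T"
  unfolding contains_TT_def by (meson order_trans)

lemma TT_cons:
  assumes "contains_TT l U T" "v \<notin> U" "\<forall>u\<in>U. T v u" "v \<in> V" "U \<subseteq> V"
  shows "contains_TT (Suc l) V T"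
proof -
  obtain f where f: "inj_on f {0..<l}" "f ` {0..<l} \<subseteq> U"
      "\<forall>i<l. \<forall>j<l. i < j \<longrightarrow> T (f i) (f j)" using assms(1) unfolding contains_TT_def by blast
  define g where "g i = (if i = 0 then v else f (i - 1))" for i
  have "inj_on g {0..<Suc l}"
  proof (rule inj_onI)
    fix i j assume ij: "i \<in> {0..<Suc l}" "j \<in> {0..<Suc l}" "g i = g j"
    show "i = j"
    proof (cases "i = 0")
      case True
      then show ?thesis using ij f(2) assms(2) unfolding g_def by (cases "j = 0") (auto simp: image_subset_iff)
    next
      case False
      then have fi: "g i = f (i - 1)" "i - 1 < l" using ij unfolding g_def by auto
      then have "g i \<in> U" using f(2) by auto
      have "j \<noteq> 0"
      proof
        assume "j = 0"
        then have "g j = v" by (simp add: g_def)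
        then show False using \<open>g i \<in> U\<close> ij(3) assms(2) by simp
      qed
      then have "g j = f (j - 1)" "j - 1 < l" using ij unfolding g_def by auto
      then have "i - 1 = j - 1" using fi ij f(1) unfolding inj_on_def by simp
      then show ?thesis using False \<open>j \<noteq> 0\<close> by simp
    qed
  qed
  moreover have "g ` {0..<Suc l} \<subseteq> V" using f(2) assms(4,5) unfolding g_def by (auto simp: image_subset_iff subset_iff)
  moreover have "\<forall>i<Suc l. \<forall>j<Suc l. i < j \<longrightarrow> T (g i) (g j)"
  proof (intro allI impI)
    fix i j assume ij: "i < Suc l" "j < Suc l" "i < j"
    show "T (g i) (g j)"
    proof (cases "i = 0")
      case True
      then show ?thesis using ij f(2) assms(3) unfolding g_def by (auto simp: image_subset_iff)
    next
      case False
      then show ?thesis using ij f(3) unfolding g_def by auto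
    qed
  qed
  ultimately show ?thesis unfolding contains_TT_def by blast
qed

lemma TT_snoc:
  assumes "contains_TT l U T" "v \<notin> U" "\<forall>u\<in>U. T u v" "v \<in> V" "U \<subseteq> V"
  shows "contains_TT (Suc l) V T"
proof -
  obtain f where f: "inj_on f {0..<l}" "f ` {0..<l} \<subseteq> U"
      "\<forall>i<l. \<forall>j<l. i < j \<longrightarrow> T (f i) (f j)" using assms(1) unfolding contains_TT_def by blast
  define g where "g i = (if i = l then v else f i)" for i
  have "inj_on g {0..<Suc l}"
  proof (rule inj_onI)
    fix i j assume ij: "i \<in> {0..<Suc l}" "j \<in> {0..<Suc l}" "g i = g j"
    show "i = j"
    proof (cases "i = l"; cases "j = l")
      assume "i \<noteq> l" "j \<noteq> l"
      then have "i < l" "j < l" "f i = f j" using ij unfolding g_def by auto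
      then show ?thesis using f(1) unfolding inj_on_def by simp
    next
      assume "i = l" "j \<noteq> l"
      then have "j < l" "v = f j" using ij unfolding g_def by auto
      then show ?thesis using f(2) assms(2) by (auto simp: image_subset_iff)
    next
      assume "i \<noteq> l" "j = l"
      then have "i < l" "v = f i" using ij unfolding g_def by auto
      then show ?thesis using f(2) assms(2) by (auto simp: image_subset_iff)
    qed simp
  qed
  moreover have "g ` {0..<Suc l} \<subseteq> V" using f(2) assms(4,5) unfolding g_def by (auto simp: less_Suc_eq image_subset_iff subset_iff)
  moreover have "\<forall>i<Suc l. \<forall>j<Suc l. i < j \<longrightarrow> T (g i) (g j)"
  proof (intro allI impI)
    fix i j assume ij: "i < Suc l" "j < Suc l" "i < j"
    then have "i < l" by simp
    show "T (g i) (g j)"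
    proof (cases "j = l")
      case True
      then show ?thesis using ij \<open>i < l\<close> f(2) assms(3) unfolding g_def by (auto simp: image_subset_iff)
    next
      case False
      then show ?thesis using ij f(3) unfolding g_def by auto
    qed
  qed
  ultimately show ?thesis unfolding contains_TT_def by blast
qed

lemma erdos_moser:
  "finite V \<Longrightarrow> tournament_on V T \<Longrightarrow> card V \<ge> 2^l \<Longrightarrow> contains_TT (Suc l) V T"
proof (induction l arbitrary: V)
  case 0
  then obtain v where v: "v \<in> V" by fastforce
  show ?case unfolding contains_TT_def
    by (rule exI[of _ "\<lambda>_. v"]) (auto simp: v)
next
  case (Suc l)
  from Suc.prems obtain v where v: "v \<in> V" by fastforce
  define Ou where "Ou = {u\<in>V. T v u}"
  define I where "I = {u\<in>V. T u v}"
  have tv: "\<not> T v v" using Suc.prems(2) v unfolding tournament_on_def by blast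
  have sub: "Ou \<subseteq> V" "I \<subseteq> V" unfolding Ou_def I_def by auto
  have fOu: "finite Ou" "finite I" using Suc.prems(1) sub finite_subset by auto
  have "V - {v} \<subseteq> Ou \<union> I" using Suc.prems(2) v unfolding tournament_on_def Ou_def I_def by blast
  then have "card (V - {v}) \<le> card (Ou \<union> I)" using fOu by (intro card_mono) auto
  also have "\<dots> \<le> card Ou + card I" by (rule card_Un_le)
  finally have c1: "card (V - {v}) \<le> card Ou + card I" .
  moreover have "card (V - {v}) = card V - 1" using v Suc.prems(1) by simp
  moreover have "(2::nat)^(Suc l) = 2*2^l" by simp
  ultimately have "card Ou \<ge> 2^l \<or> card I \<ge> 2^l" using Suc.prems(3) by linarith
  moreover have tOu: "tournament_on Ou T" "tournament_on I T"
    using Suc.prems(2) tournament_sub sub by blast+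
  moreover have vOu: "v \<notin> Ou" "v \<notin> I" using tv unfolding Ou_def I_def by auto
  ultimately consider "contains_TT (Suc l) Ou T" | "contains_TT (Suc l) I T" using Suc.IH fOu by blast
  then show ?case
  proof cases
    case 1
    then show ?thesis by (rule TT_cons) (use vOu v sub in \<open>auto simp: Ou_def\<close>)
  next
    case 2
    then show ?thesis by (rule TT_snoc) (use vOu v sub in \<open>auto simp: I_def\<close>)
  qed
qed

lemma dir_ramsey_facts:
  assumes "chi \<ge> 1"
  obtains T where "dir_ramsey chi \<ge> 1" "tournament_on {0..<dir_ramsey chi - 1} T"
    "\<not> contains_TT chi {0..<dir_ramsey chi - 1} T"
proof -
  define P where "P N = (\<forall>M\<ge>N. \<forall>T :: nat \<Rightarrow> nat \<Rightarrow> bool.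
       tournament_on {0..<M} T \<longrightarrow> contains_TT chi {0..<M} T)" for N
  have dr: "dir_ramsey chi = (LEAST N. P N)" unfolding dir_ramsey_def P_def by simp
  have "P (2^(chi-1))" unfolding P_def
  proof (intro allI impI)
    fix M and T :: "nat \<Rightarrow> nat \<Rightarrow> bool" assume "2^(chi-1) \<le> M" "tournament_on {0..<M} T"
    then have "contains_TT (Suc (chi-1)) {0..<M} T" by (intro erdos_moser) auto
    then show "contains_TT chi {0..<M} T" using assms by simp
  qed
  then have PR: "P (dir_ramsey chi)" unfolding dr by (rule LeastI[of P])
  have "\<not> P 0" unfolding P_def
  proof
    assume "\<forall>M\<ge>0. \<forall>T :: nat \<Rightarrow> nat \<Rightarrow> bool. tournament_on {0..<M} T \<longrightarrow> contains_TT chi {0..<M} T"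
    moreover have "tournament_on {0..<0::nat} (\<lambda>x y. False)" unfolding tournament_on_def by auto
    ultimately have "contains_TT chi {0..<0::nat} (\<lambda>x y. False)" by (meson order_refl)
    then show False unfolding contains_TT_def using assms by auto
  qed
  then have R1: "dir_ramsey chi \<ge> 1" using PR by (cases "dir_ramsey chi") auto
  have "dir_ramsey chi - 1 < (LEAST N. P N)" using R1 dr by simp
  then have "\<not> P (dir_ramsey chi - 1)" by (rule not_less_Least)
  then obtain M T where MT: "M \<ge> dir_ramsey chi - 1" "tournament_on {0..<M} T" "\<not> contains_TT chi {0..<M} T"
    unfolding P_def by auto
  have "tournament_on {0..<dir_ramsey chi - 1} T" using MT(2) by (rule tournament_sub) (use MT(1) in auto)
  moreover have "\<not> contains_TT chi {0..<dir_ramsey chi - 1} T" using MT(3) contains_TT_mono[of chi "{0..<dir_ramsey chi - 1}" T "{0..<M}"] MT(1) by auto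
  ultimately show ?thesis using R1 that by simp
qed



lemma embeds_mono: "embeds VG EG L P \<Longrightarrow> L \<le> N \<Longrightarrow> embeds VG EG N P"
proof -
  assume "embeds VG EG L P" "L \<le> N"
  then obtain f where f: "inj_on f VG" "f ` VG \<subseteq> {0..<L}" "\<forall>e\<in>EG. P (f ` e)" unfolding embeds_def by blast
  have "{0..<L} \<subseteq> {0..<N}" using \<open>L \<le> N\<close> by auto
  then have "f ` VG \<subseteq> {0..<N}" using f(2) by (rule order_trans[rotated])
  then show ?thesis unfolding embeds_def using f(1,3) by blast
qed

lemma embeds_homog:
  assumes "inj_on g VG" "g ` VG \<subseteq> Hs" "\<forall>e\<in>EG. e \<subseteq> VG \<and> card e = 3"
    "\<forall>e. e \<subseteq> Hs \<and> card e = 3 \<longrightarrow> P e" "Hs \<subseteq> {0..<N}"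
  shows "embeds VG EG N P"
  unfolding embeds_def
proof (intro exI conjI ballI)
  show "inj_on g VG" by fact
  show "g ` VG \<subseteq> {0..<N}" using assms(2,5) by (rule order_trans)
  fix e assume "e \<in> EG"
  then have e: "e \<subseteq> VG" "card e = 3" using assms(3) by auto
  have "card (g ` e) = 3" using e card_image inj_on_subset assms(1) by metis
  moreover have "g ` e \<subseteq> Hs" using e(1) assms(2) by auto
  ultimately show "P (g ` e)" using assms(4) by simp
qed

lemma path_edges: "\<forall>e\<in>tight_path_E n. e \<subseteq> tight_path_V n \<and> card e = 3"
  unfolding tight_path_E_def tight_path_V_def by auto

lemma HTT_edges: "\<forall>e\<in>HTT_E chi m. e \<subseteq> HTT_V chi m \<and> card e = 3"
  unfolding HTT_E_def HTT_V_def by auto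

lemma lin_inj: "inj_on (\<lambda>(a, b). a * m + b) ({0..<chi} \<times> {0..<(m::nat)})"
proof (rule inj_onI)
  fix x y assume xy: "x \<in> {0..<chi} \<times> {0..<m}" "y \<in> {0..<chi} \<times> {0..<m}"
    "(\<lambda>(a, b). a * m + b) x = (\<lambda>(a, b). a * m + b) y"
  obtain a b where x: "x = (a, b)" by (cases x)
  obtain a' b' where y: "y = (a', b')" by (cases y)
  have "b < m" "b' < m" "a * m + b = a' * m + b'" using xy x y by auto
  have "a = (a * m + b) div m" "b = (a * m + b) mod m" using \<open>b < m\<close> by simp_all
  moreover have "a' = (a' * m + b') div m" "b' = (a' * m + b') mod m" using \<open>b' < m\<close> by simp_all
  ultimately have "a = a' \<and> b = b'" using \<open>a * m + b = a' * m + b'\<close> by metis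
  then show "x = y" using x y by simp
qed

lemma lin_bound: "a < chi \<Longrightarrow> b < (m::nat) \<Longrightarrow> a * m + b < chi * m"
proof -
  assume "a < chi" "b < m"
  then have "a * m + b < a * m + m" by simp
  also have "\<dots> = (a + 1) * m" by simp
  also have "\<dots> \<le> chi * m" using \<open>a < chi\<close> by (intro mult_right_mono) auto
  finally show ?thesis .
qed

lemma ramsey3_exists:
  "\<exists>N. \<forall>c. embeds (tight_path_V n) (tight_path_E n) N c \<or> embeds (HTT_V chi m) (HTT_E chi m) N (\<lambda>e. \<not> c e)"
proof -
  define K where "K = n + chi * m"
  obtain N :: nat where N: "partn_lst {..<N} [K, K] 3" using ramsey_full[of "[K, K]" 3] by blast
  show ?thesis
  proof (intro exI allI)
    fix c :: "nat set \<Rightarrow> bool"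
    define f where "f e = (if c e then 0 else 1::nat)" for e
    have "f \<in> nsets {..<N} 3 \<rightarrow> {..<length [K, K]}" unfolding f_def by auto
    then obtain i Hs where iH: "i < length [K, K]" "Hs \<in> nsets {..<N} ([K, K] ! i)" "f ` (nsets Hs 3) \<subseteq> {i}"
      using partn_lstE[OF N] by blast
    have "i = 0 \<or> i = 1" using iH(1) by auto
    then have KK: "[K, K] ! i = K" by auto
    have Hs: "Hs \<subseteq> {0..<N}" "finite Hs" "card Hs = K" using iH(2) KK by (auto simp: nsets_def)
    obtain h where h: "bij_betw h {0..<card Hs} Hs" using ex_bij_betw_nat_finite[OF Hs(2)] by blast
    have hinj: "inj_on h {0..<K}" and himg: "h ` {0..<K} = Hs" using h Hs(3) by (auto simp: bij_betw_def)
    have col: "\<forall>e. e \<subseteq> Hs \<and> card e = 3 \<longrightarrow> f e = i"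
    proof (intro allI impI)
      fix e assume "e \<subseteq> Hs \<and> card e = 3"
      then have "e \<in> nsets Hs 3" unfolding nsets_def using card.infinite by fastforce
      then show "f e = i" using iH(3) by auto
    qed
    show "embeds (tight_path_V n) (tight_path_E n) N c \<or> embeds (HTT_V chi m) (HTT_E chi m) N (\<lambda>e. \<not> c e)"
    proof (cases "i = 0")
      case True
      have sub: "{0..<n} \<subseteq> {0..<K}" unfolding K_def by auto
      have "embeds (tight_path_V n) (tight_path_E n) N c"
      proof (rule embeds_homog[where g = h and Hs = Hs])
        show "inj_on h (tight_path_V n)" unfolding tight_path_V_def using hinj sub by (rule inj_on_subset)
        show "h ` tight_path_V n \<subseteq> Hs" unfolding tight_path_V_def using sub himg by auto
        show "\<forall>e\<in>tight_path_E n. e \<subseteq> tight_path_V n \<and> card e = 3" by (rule path_edges)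
        show "\<forall>e. e \<subseteq> Hs \<and> card e = 3 \<longrightarrow> c e" using col True unfolding f_def by (metis zero_neq_one)
        show "Hs \<subseteq> {0..<N}" by (rule Hs(1))
      qed
      then show ?thesis ..
    next
      case False
      define g where "g = h \<circ> (\<lambda>(a, b). a * m + b)"
      have lin_img: "(\<lambda>(a, b). a * m + b) ` HTT_V chi m \<subseteq> {0..<K}"
        unfolding HTT_V_def K_def using lin_bound by fastforce
      have "embeds (HTT_V chi m) (HTT_E chi m) N (\<lambda>e. \<not> c e)"
      proof (rule embeds_homog[where g = g and Hs = Hs])
        show "inj_on g (HTT_V chi m)" unfolding g_def
          using lin_inj[of m chi] inj_on_subset[OF hinj lin_img] unfolding HTT_V_def by (rule comp_inj_on)
        show "g ` HTT_V chi m \<subseteq> Hs" unfolding g_def using lin_img himg by (metis image_comp image_mono)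
        show "\<forall>e\<in>HTT_E chi m. e \<subseteq> HTT_V chi m \<and> card e = 3" by (rule HTT_edges)
        show "\<forall>e. e \<subseteq> Hs \<and> card e = 3 \<longrightarrow> \<not> c e" using col False unfolding f_def by (metis)
        show "Hs \<subseteq> {0..<N}" by (rule Hs(1))
      qed
      then show ?thesis ..
    qed
  qed
qed

lemma ramsey3_lower:
  assumes "\<not> embeds (tight_path_V n) (tight_path_E n) N c" "\<not> embeds (HTT_V chi m) (HTT_E chi m) N (\<lambda>e. \<not> c e)"
  shows "ramsey3 (tight_path_V n) (tight_path_E n) (HTT_V chi m) (HTT_E chi m) > N"
proof (rule ccontr)
  define Q where "Q L = (\<forall>c :: nat set \<Rightarrow> bool. embeds (tight_path_V n) (tight_path_E n) L c \<or> embeds (HTT_V chi m) (HTT_E chi m) L (\<lambda>e. \<not> c e))" for L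
  have r: "ramsey3 (tight_path_V n) (tight_path_E n) (HTT_V chi m) (HTT_E chi m) = (LEAST L. Q L)"
    unfolding ramsey3_def Q_def by simp
  obtain L0 where "Q L0" using ramsey3_exists unfolding Q_def by blast
  then have QL: "Q (LEAST L. Q L)" by (rule LeastI[of Q])
  assume "\<not> N < ramsey3 (tight_path_V n) (tight_path_E n) (HTT_V chi m) (HTT_E chi m)"
  then have le: "(LEAST L. Q L) \<le> N" using r by simp
  from QL have "embeds (tight_path_V n) (tight_path_E n) (LEAST L. Q L) c \<or> embeds (HTT_V chi m) (HTT_E chi m) (LEAST L. Q L) (\<lambda>e. \<not> c e)"
    unfolding Q_def by blast
  then show False
  proof
    assume "embeds (tight_path_V n) (tight_path_E n) (LEAST L. Q L) c"
    then show False using embeds_mono[OF _ le] assms(1) by blast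
  next
    assume "embeds (HTT_V chi m) (HTT_E chi m) (LEAST L. Q L) (\<lambda>e. \<not> c e)"
    then have "embeds (HTT_V chi m) (HTT_E chi m) N (\<lambda>e. \<not> c e)" using le by (rule embeds_mono)
    then show False using assms(2) by simp
  qed
qed



lemma blue_pair_lemma:
  fixes B :: "nat \<Rightarrow> nat"
  assumes d: "x \<noteq> x'" "x \<noteq> y" "x' \<noteq> y" and bx: "B x = B x'" and irr: "\<not> T (B x) (B x)"
    and blue: "(\<exists>u v w. {x,x',y} = {u,v,w} \<and> B u \<noteq> B v \<and> B v \<noteq> B w \<and> B u \<noteq> B w) \<or>
               (\<exists>u u' w. {x,x',y} = {u,u',w} \<and> u \<noteq> u' \<and> B u = B u' \<and> T (B u) (B w))"
  shows "T (B x) (B y)"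
  using blue
proof
  assume "\<exists>u v w. {x,x',y} = {u,v,w} \<and> B u \<noteq> B v \<and> B v \<noteq> B w \<and> B u \<noteq> B w"
  then obtain u v w where uvw: "{x,x',y} = {u,v,w}" "B u \<noteq> B v" "B v \<noteq> B w" "B u \<noteq> B w" by blast
  have "u \<in> {x,x',y}" "v \<in> {x,x',y}" "w \<in> {x,x',y}" using uvw(1) by auto
  then have "B u \<in> {B x, B y}" "B v \<in> {B x, B y}" "B w \<in> {B x, B y}" using bx by auto
  then show ?thesis using uvw(2-4) by auto
next
  assume "\<exists>u u' w. {x,x',y} = {u,u',w} \<and> u \<noteq> u' \<and> B u = B u' \<and> T (B u) (B w)"
  then obtain u u' w where uvw: "{x,x',y} = {u,u',w}" "u \<noteq> u'" "B u = B u'" "T (B u) (B w)" by blast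
  have m1: "u \<in> {x,x',y}" "u' \<in> {x,x',y}" "w \<in> {x,x',y}" using uvw(1) by auto
  have m2: "x \<in> {u,u',w}" "x' \<in> {u,u',w}" "y \<in> {u,u',w}" using uvw(1) by auto
  have "w \<noteq> u" "w \<noteq> u'" using m2 d by auto
  show ?thesis
  proof (cases "w = y")
    case True
    then have "u \<in> {x, x'}" using m1 \<open>w \<noteq> u\<close> by auto
    then show ?thesis using True uvw(4) bx by auto
  next
    case False
    then have "w = x \<or> w = x'" using m1 by auto
    moreover have "u = y \<or> u' = y" using m2 False by auto
    have "B w = B x" using \<open>w = x \<or> w = x'\<close> bx by auto
    moreover have "B u = B x"
    proof (cases "u = y")
      case True
      then have "u' \<in> {x, x'}" using m1 uvw(2) by auto
      then show ?thesis using uvw(3) bx by auto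
    next
      case False
      then show ?thesis using m1 bx by auto
    qed
    ultimately show ?thesis using uvw(4) irr by simp
  qed
qed

definition blueC :: "nat \<Rightarrow> (nat \<Rightarrow> nat \<Rightarrow> bool) \<Rightarrow> nat set \<Rightarrow> bool" where
  "blueC s T e = ((\<exists>x y z. e = {x,y,z} \<and> x div s \<noteq> y div s \<and> y div s \<noteq> z div s \<and> x div s \<noteq> z div s) \<or>
     (\<exists>x x' y. e = {x,x',y} \<and> x \<noteq> x' \<and> x div s = x' div s \<and> T (x div s) (y div s)))"

lemma no_blue_H:
  assumes tour: "tournament_on {0..<r} T" and noTT: "\<not> contains_TT chi {0..<r} T"
    and rm: "r < m" and s1: "s \<ge> 1"
  shows "\<not> embeds (HTT_V chi m) (HTT_E chi m) (r*s) (blueC s T)"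
proof
  assume "embeds (HTT_V chi m) (HTT_E chi m) (r*s) (blueC s T)"
  then obtain g where g: "inj_on g (HTT_V chi m)" "g ` HTT_V chi m \<subseteq> {0..<r*s}"
    "\<forall>e\<in>HTT_E chi m. blueC s T (g ` e)" unfolding embeds_def by blast
  define B where "B x = x div s" for x
  have Bl: "B (g (i, k)) < r" if "i < chi" "k < m" for i k
  proof -
    have "(i, k) \<in> HTT_V chi m" using that unfolding HTT_V_def by auto
    then have "g (i, k) \<in> {0..<r * s}" using g(2) by blast
    then show ?thesis unfolding B_def using s1 by (simp add: div_less_iff_less_mult)
  qed
  have irr: "\<not> T p p" if "p < r" for p using tour that unfolding tournament_on_def by auto
  have "\<forall>i. \<exists>p. i < chi \<longrightarrow> (fst p < m \<and> snd p < m \<and> fst p \<noteq> snd p \<and> B (g (i, fst p)) = B (g (i, snd p)))"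
  proof
    fix i
    show "\<exists>p. i < chi \<longrightarrow> (fst p < m \<and> snd p < m \<and> fst p \<noteq> snd p \<and> B (g (i, fst p)) = B (g (i, snd p)))"
    proof (cases "i < chi")
      case True
      define h where "h k = B (g (i, k))" for k
      have "h ` {0..<m} \<subseteq> {0..<r}" unfolding h_def using Bl True by auto
      then have "card (h ` {0..<m}) \<le> card {0..<r}" by (intro card_mono) auto
      then have cr: "card (h ` {0..<m}) \<le> r" by simp
      have "\<not> inj_on h {0..<m}"
      proof
        assume "inj_on h {0..<m}"
        then have "card (h ` {0..<m}) = m" by (simp add: card_image)
        then show False using cr rm by simp
      qed
      then obtain k k' where kk': "k \<in> {0..<m}" "k' \<in> {0..<m}" "h k = h k'" "k \<noteq> k'"
        unfolding inj_on_def by blast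
      show ?thesis using True kk' unfolding h_def by (intro exI[of _ "(k, k')"]) simp
    qed simp
  qed
  then obtain kk where kk: "\<And>i. i < chi \<Longrightarrow> fst (kk i) < m \<and> snd (kk i) < m \<and> fst (kk i) \<noteq> snd (kk i) \<and> B (g (i, fst (kk i))) = B (g (i, snd (kk i)))"
    using choice[of "\<lambda>i p. i < chi \<longrightarrow> (fst p < m \<and> snd p < m \<and> fst p \<noteq> snd p \<and> B (g (i, fst p)) = B (g (i, snd p)))"] by blast
  define a where "a i = B (g (i, fst (kk i)))" for i
  have Ta: "T (a i) (a j)" if ij: "i < j" "j < chi" for i j
  proof -
    have i: "i < chi" using ij by simp
    define x where "x = g (i, fst (kk i))"
    define x' where "x' = g (i, snd (kk i))"
    define y where "y = g (j, fst (kk j))"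
    have e: "{(i, fst (kk i)), (i, snd (kk i)), (j, fst (kk j))} \<in> HTT_E chi m"
      unfolding HTT_E_def using kk[OF i] kk[OF ij(2)] ij by blast
    have inV: "(i, fst (kk i)) \<in> HTT_V chi m" "(i, snd (kk i)) \<in> HTT_V chi m" "(j, fst (kk j)) \<in> HTT_V chi m"
      unfolding HTT_V_def using kk[OF i] kk[OF ij(2)] ij by auto
    have d: "x \<noteq> x'" "x \<noteq> y" "x' \<noteq> y" unfolding x_def x'_def y_def
      using inj_onD[OF g(1) _ inV(1) inV(2)] inj_onD[OF g(1) _ inV(1) inV(3)] inj_onD[OF g(1) _ inV(2) inV(3)]
        kk[OF i] ij by auto
    have "blueC s T {x, x', y}" using g(3) e unfolding x_def x'_def y_def by force
    then have bl: "(\<exists>u v w. {x,x',y} = {u,v,w} \<and> B u \<noteq> B v \<and> B v \<noteq> B w \<and> B u \<noteq> B w) \<or>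
               (\<exists>u u' w. {x,x',y} = {u,u',w} \<and> u \<noteq> u' \<and> B u = B u' \<and> T (B u) (B w))"
      unfolding blueC_def B_def .
    have "T (B x) (B y)"
      by (rule blue_pair_lemma[OF d _ _ bl]) (use kk[OF i] irr Bl[OF i] in \<open>auto simp: x_def x'_def\<close>)
    then show ?thesis unfolding a_def x_def y_def .
  qed
  have "contains_TT chi {0..<r} T" unfolding contains_TT_def
  proof (intro exI conjI)
    show "inj_on a {0..<chi}"
    proof (rule inj_onI)
      fix i j assume "i \<in> {0..<chi}" "j \<in> {0..<chi}" "a i = a j"
      moreover have "a i < r" if "i < chi" for i using Bl[OF that] kk[OF that] unfolding a_def by simp
      ultimately show "i = j" using Ta irr by (metis atLeastLessThan_iff linorder_neqE_nat)
    qed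
    show "a ` {0..<chi} \<subseteq> {0..<r}" using Bl kk unfolding a_def by auto
    show "\<forall>i<chi. \<forall>j<chi. i < j \<longrightarrow> T (a i) (a j)" using Ta by blast
  qed
  then show False using noTT by simp
qed

lemma count_two:
  fixes b :: "nat \<Rightarrow> nat"
  assumes two: "\<And>i. i + 2 < n \<Longrightarrow> (b i = p \<and> b (i+1) = p) \<or> (b i = p \<and> b (i+2) = p) \<or> (b (i+1) = p \<and> b (i+2) = p)"
  shows "3 * k \<le> n \<Longrightarrow> card {j. j < 3 * k \<and> b j = p} \<ge> 2 * k"
proof (induction k)
  case 0
  then show ?case by simp
next
  case (Suc k)
  define W where "W = {j. 3 * k \<le> j \<and> j < 3 * k + 3 \<and> b j = p}"
  have eq: "{j. j < 3 * Suc k \<and> b j = p} = {j. j < 3 * k \<and> b j = p} \<union> W" unfolding W_def by auto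
  have disj: "{j. j < 3 * k \<and> b j = p} \<inter> W = {}" unfolding W_def by auto
  have fin: "finite W" "finite {j. j < 3 * k \<and> b j = p}" unfolding W_def by auto
  have "3 * k + 2 < n" using Suc.prems by simp
  then have tw: "(b (3*k) = p \<and> b (3*k+1) = p) \<or> (b (3*k) = p \<and> b (3*k+2) = p) \<or> (b (3*k+1) = p \<and> b (3*k+2) = p)"
    by (rule two)
  have "\<exists>a c. a \<noteq> c \<and> {a, c} \<subseteq> W"
  proof -
    from tw consider "b (3*k) = p \<and> b (3*k+1) = p" | "b (3*k) = p \<and> b (3*k+2) = p" | "b (3*k+1) = p \<and> b (3*k+2) = p"
      by blast
    then show ?thesis
    proof cases
      case 1
      then show ?thesis unfolding W_def by (intro exI[of _ "3*k"] exI[of _ "3*k+1"]) auto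
    next
      case 2
      then show ?thesis unfolding W_def by (intro exI[of _ "3*k"] exI[of _ "3*k+2"]) auto
    next
      case 3
      then show ?thesis unfolding W_def by (intro exI[of _ "3*k+1"] exI[of _ "3*k+2"]) auto
    qed
  qed
  then obtain a c where ac: "a \<noteq> c" "{a, c} \<subseteq> W" by blast
  have "2 = card {a, c}" using ac(1) by simp
  also have "\<dots> \<le> card W" using ac(2) fin(1) by (rule card_mono[rotated])
  finally have "card W \<ge> 2" .
  moreover have "card {j. j < 3 * k \<and> b j = p} \<ge> 2 * k" using Suc by simp
  ultimately show ?case unfolding eq using card_Un_disjoint[OF fin(2) fin(1) disj] by simp
qed

lemma block_card:
  assumes "(s::nat) \<ge> 1"
  shows "card {x::nat. x div s = p} = s"
proof -
  have "{x::nat. x div s = p} = {p * s..<p * s + s}"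
  proof (intro set_eqI iffI)
    fix x assume "x \<in> {x. x div s = p}"
    then have "x div s = p" by simp
    moreover have "x = x div s * s + x mod s" by simp
    moreover have "x mod s < s" using assms by simp
    ultimately show "x \<in> {p * s..<p * s + s}" by (metis atLeastLessThan_iff add_less_cancel_left le_add1)
  next
    fix x assume "x \<in> {p * s..<p * s + s}"
    then have "p * s \<le> x" "x < p * s + s" by auto
    then show "x \<in> {x. x div s = p}" using assms
      by (simp add: div_nat_eqI mult.commute)
  qed
  then show ?thesis by simp
qed

lemma no_red_path:
  assumes tour: "tournament_on {0..<r} T" and s1: "s \<ge> 1" and sn: "s < 2 * (n div 3)"
  shows "\<not> embeds (tight_path_V n) (tight_path_E n) (r*s) (\<lambda>e. \<not> blueC s T e)"
proof
  assume "embeds (tight_path_V n) (tight_path_E n) (r*s) (\<lambda>e. \<not> blueC s T e)"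
  then obtain g where g: "inj_on g {0..<n}" "g ` {0..<n} \<subseteq> {0..<r*s}"
    "\<forall>e\<in>tight_path_E n. \<not> blueC s T (g ` e)" unfolding embeds_def tight_path_V_def by blast
  define b where "b j = g j div s" for j
  have bl: "b j < r" if "j < n" for j
  proof -
    have "g j \<in> g ` {0..<n}" using that by simp
    then have "g j \<in> {0..<r * s}" using g(2) by (rule subsetD[rotated])
    then show ?thesis unfolding b_def using s1 by (simp add: div_less_iff_less_mult)
  qed
  have tourn: "T p q \<or> T q p" if "p < r" "q < r" "p \<noteq> q" for p q
  proof -
    have "p \<in> {0..<r}" "q \<in> {0..<r}" using that by auto
    then have "T p q = (\<not> T q p)" using tour that(3) unfolding tournament_on_def by blast
    then show ?thesis by blast
  qed
  have red: "\<not> blueC s T {g i, g (i+1), g (i+2)}" if "i + 2 < n" for i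
  proof -
    have "{i, i+1, i+2} \<in> tight_path_E n" unfolding tight_path_E_def using that by blast
    then show ?thesis using g(3) by force
  qed
  have dist: "g i \<noteq> g (i+1)" "g i \<noteq> g (i+2)" "g (i+1) \<noteq> g (i+2)" if "i + 2 < n" for i
    using inj_onD[OF g(1), of i "i+1"] inj_onD[OF g(1), of i "i+2"] inj_onD[OF g(1), of "i+1" "i+2"] that by auto
  have R1: "\<not> (b i \<noteq> b (i+1) \<and> b (i+1) \<noteq> b (i+2) \<and> b i \<noteq> b (i+2))" if "i + 2 < n" for i
    using red[OF that] unfolding blueC_def b_def by blast
  have R2a: "\<not> T (b i) (b (i+2))" if "i + 2 < n" "b i = b (i+1)" for i
    using red[OF that(1)] dist[OF that(1)] that(2) unfolding blueC_def b_def by blast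
  have R2b: "\<not> T (b i) (b (i+1))" if "i + 2 < n" "b i = b (i+2)" for i
  proof -
    have "{g i, g (i+1), g (i+2)} = {g i, g (i+2), g (i+1)}" by auto
    then show ?thesis using red[OF that(1)] dist[OF that(1)] that(2) unfolding blueC_def b_def by metis
  qed
  have R2c: "\<not> T (b (i+1)) (b i)" if "i + 2 < n" "b (i+1) = b (i+2)" for i
  proof -
    have "{g i, g (i+1), g (i+2)} = {g (i+1), g (i+2), g i}" by auto
    then show ?thesis using red[OF that(1)] dist[OF that(1)] that(2) unfolding blueC_def b_def by metis
  qed
  define p where "p = (if b 0 = b 1 \<or> b 0 = b 2 then b 0 else b 1)"
  have two: "(b i = p \<and> b (i+1) = p) \<or> (b i = p \<and> b (i+2) = p) \<or> (b (i+1) = p \<and> b (i+2) = p)"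
    if "i + 2 < n" for i
    using that
  proof (induction i)
    case 0
    then show ?case using R1[of 0] unfolding p_def by (simp add: numeral_2_eq_2) metis
  next
    case (Suc i)
    then have IH: "(b i = p \<and> b (i+1) = p) \<or> (b i = p \<and> b (i+2) = p) \<or> (b (i+1) = p \<and> b (i+2) = p)"
      by simp
    have n1: "i + 2 < n" "Suc i + 2 < n" using Suc.prems by auto
    have R1': "\<not> (b (i+1) \<noteq> b (i+2) \<and> b (i+2) \<noteq> b (i+3) \<and> b (i+1) \<noteq> b (i+3))"
      using R1[OF n1(2)] by (simp add: numeral_3_eq_3)
    have bl': "b i < r" "b (i+1) < r" "b (i+2) < r" "b (i+3) < r" using bl n1 by auto
    consider "b (i+1) = p \<and> b (i+2) = p" | "b i = p \<and> b (i+1) = p \<and> b (i+2) \<noteq> p"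
      | "b i = p \<and> b (i+2) = p \<and> b (i+1) \<noteq> p" using IH by blast
    then show ?case
    proof cases
      case 1
      then show ?thesis by simp
    next
      case 2
      then have A: "\<not> T p (b (i+2))" using R2a[OF n1(1)] by simp
      have "b (i+3) = p"
      proof (rule ccontr)
        assume "b (i+3) \<noteq> p"
        then have "b (i+3) = b (i+2)" using R1' 2 by auto
        then have "\<not> T (b (i+2)) p" using R2c[OF n1(2)] 2 by (simp add: numeral_3_eq_3)
        then show False using A tourn[of p "b (i+2)"] 2 bl' by auto
      qed
      then show ?thesis using 2 by (simp add: numeral_3_eq_3)
    next
      case 3
      then have A: "\<not> T p (b (i+1))" using R2b[OF n1(1)] by simp
      have "b (i+3) = p"
      proof (rule ccontr)
        assume "b (i+3) \<noteq> p"
        then have "b (i+3) = b (i+1)" using R1' 3 by auto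
        then have "\<not> T (b (i+1)) p" using R2b[OF n1(2)] 3 by (simp add: numeral_3_eq_3)
        then show False using A tourn[of p "b (i+1)"] 3 bl' by auto
      qed
      then show ?thesis using 3 by (simp add: numeral_3_eq_3)
    qed
  qed
  have "3 * (n div 3) \<le> n" by simp
  then have c1: "card {j. j < 3 * (n div 3) \<and> b j = p} \<ge> 2 * (n div 3)"
    using count_two[of n b p "n div 3"] two by blast
  define S where "S = {j. j < 3 * (n div 3) \<and> b j = p}"
  have "S \<subseteq> {0..<n}" unfolding S_def by auto
  then have cS: "card (g ` S) = card S" using g(1) by (meson card_image inj_on_subset)
  have "g ` S \<subseteq> {x. x div s = p}" unfolding S_def b_def by auto
  moreover have "finite {x. x div s = p}" using block_card[OF s1, of p] s1 card.infinite by fastforce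
  ultimately have "card (g ` S) \<le> card {x. x div s = p}" by (rule card_mono[rotated])
  then have "card S \<le> s" using block_card[OF s1, of p] cS by simp
  then show False using c1 sn unfolding S_def by simp
qed


theorem proposition1p15:
  fixes chi m :: nat
  assumes "chi \<ge> 3" and "m \<ge> dir_ramsey chi"
  shows "(\<forall>n::nat. n \<ge> 3 \<longrightarrow>
            real (ramsey3 (tight_path_V n) (tight_path_E n) (HTT_V chi m) (HTT_E chi m))
              \<ge> (2/3 * real n - 3) * (real (dir_ramsey chi) - 1) + 1)
       \<and> (\<forall>\<epsilon>>0. \<forall>\<^sub>F n in sequentially.
            real (ramsey3 (tight_path_V n) (tight_path_E n) (HTT_V chi m) (HTT_E chi m))
              \<ge> (1 - \<epsilon>) * (2/3) * (real (dir_ramsey chi) - 1) * real n)"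
proof -
  have "chi \<ge> 1" using assms(1) by simp
  then obtain T where R1: "dir_ramsey chi \<ge> 1" and tour: "tournament_on {0..<dir_ramsey chi - 1} T"
    and noTT: "\<not> contains_TT chi {0..<dir_ramsey chi - 1} T" by (rule dir_ramsey_facts)
  define r where "r = dir_ramsey chi - 1"
  have rR: "real (dir_ramsey chi) - 1 = real r" unfolding r_def using R1 by (simp add: of_nat_diff)
  have rm: "r < m" unfolding r_def using R1 assms(2) by simp
  have P1: "real (ramsey3 (tight_path_V n) (tight_path_E n) (HTT_V chi m) (HTT_E chi m))
              \<ge> (2/3 * real n - 3) * (real (dir_ramsey chi) - 1) + 1" if n3: "n \<ge> 3" for n
  proof -
    define s where "s = 2 * (n div 3) - 1"
    have d1: "n div 3 \<ge> 1" using n3 by simp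
    have s1: "s \<ge> 1" and sn: "s < 2 * (n div 3)" unfolding s_def using d1 by auto
    have nb: "\<not> embeds (tight_path_V n) (tight_path_E n) (r*s) (\<lambda>e. \<not> blueC s T e)"
      using tour s1 sn unfolding r_def by (intro no_red_path) auto
    have "\<not> embeds (HTT_V chi m) (HTT_E chi m) (r*s) (blueC s T)"
      using tour noTT rm s1 unfolding r_def by (intro no_blue_H) auto
    moreover have "(\<lambda>e. \<not> \<not> blueC s T e) = blueC s T" by simp
    ultimately have nb2: "\<not> embeds (HTT_V chi m) (HTT_E chi m) (r*s) (\<lambda>e. \<not> \<not> blueC s T e)" by simp
    have lt: "r * s < ramsey3 (tight_path_V n) (tight_path_E n) (HTT_V chi m) (HTT_E chi m)"
      by (rule ramsey3_lower[OF nb nb2])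
    then have L: "real (r * s) + 1 \<le> real (ramsey3 (tight_path_V n) (tight_path_E n) (HTT_V chi m) (HTT_E chi m))"
      by linarith
    have "real s = 2 * real (n div 3) - 1" unfolding s_def using d1 by (simp add: of_nat_diff)
    moreover have "real n \<le> 3 * real (n div 3) + 2"
    proof -
      have "n = 3 * (n div 3) + n mod 3" by simp
      moreover have "n mod 3 \<le> 2" by simp
      ultimately have "n \<le> 3 * (n div 3) + 2" by linarith
      then show ?thesis by linarith
    qed
    ultimately have "2/3 * real n - 3 \<le> real s" by linarith
    then have "(2/3 * real n - 3) * real r \<le> real s * real r" by (rule mult_right_mono) simp
    then show ?thesis using L rR by (simp add: mult.commute)
  qed
  have P2: "\<forall>\<^sub>F n in sequentially.
            real (ramsey3 (tight_path_V n) (tight_path_E n) (HTT_V chi m) (HTT_E chi m))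
              \<ge> (1 - \<epsilon>) * (2/3) * (real (dir_ramsey chi) - 1) * real n" if ep: "\<epsilon> > 0" for \<epsilon> :: real
  proof -
    have ev: "\<forall>\<^sub>F n in sequentially. n \<ge> max 3 (nat \<lceil>9 / (2 * \<epsilon>)\<rceil>)" by (rule eventually_ge_at_top)
    show ?thesis
    proof (rule eventually_mono[OF ev])
      fix n :: nat assume n: "n \<ge> max 3 (nat \<lceil>9 / (2 * \<epsilon>)\<rceil>)"
      then have n3: "n \<ge> 3" by simp
      have "real n \<ge> 9 / (2 * \<epsilon>)"
      proof -
        have "real (nat \<lceil>9 / (2 * \<epsilon>)\<rceil>) \<ge> 9 / (2 * \<epsilon>)" by (rule real_nat_ceiling_ge)
        moreover have "real (nat \<lceil>9 / (2 * \<epsilon>)\<rceil>) \<le> real n" using n by simp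
        ultimately show ?thesis by linarith
      qed
      then have "\<epsilon> * real n \<ge> \<epsilon> * (9 / (2 * \<epsilon>))" using ep by (intro mult_left_mono) auto
      moreover have "\<epsilon> * (9 / (2 * \<epsilon>)) = 9 / 2" using ep by (simp add: field_simps)
      ultimately have en: "\<epsilon> * real n \<ge> 9 / 2" by simp
      have "(2/3 * (\<epsilon> * real n) - 3) * real r \<ge> 0" using en by (intro mult_nonneg_nonneg) auto
      moreover have "(2/3 * real n - 3) * real r + 1 - (1 - \<epsilon>) * (2/3) * real r * real n
          = (2/3 * (\<epsilon> * real n) - 3) * real r + 1" by (simp add: field_simps)
      ultimately have "(1 - \<epsilon>) * (2/3) * real r * real n \<le> (2/3 * real n - 3) * real r + 1" by linarith
      then show "real (ramsey3 (tight_path_V n) (tight_path_E n) (HTT_V chi m) (HTT_E chi m))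
              \<ge> (1 - \<epsilon>) * (2/3) * (real (dir_ramsey chi) - 1) * real n"
        using P1[OF n3] rR by simp
    qed
  qed
  show ?thesis using P1 P2 by blast
qed

end
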